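(* A set $S\subseteq\mathbb{M}^\Sigma$ is a masked semilinear set if and only if there exists an automaton $\mathcal{A}$ over $\Sigma$ such that $S=\Psi(\mathfrak{J}(\mathcal{A}))$.
   Context: Automata are nondeterministic B\"uchi automata $\langle\Sigma,Q,\delta,Q_0,\alpha\rangle$ over infinite words. For $w\in\Sigma^\omega$, $\Psi(w)\in\mathbb{N}_\infty^\Sigma$ gives for each letter its number of occurrences (or $\infty$ if infinitely many); $w\sim w'$ iff $\Psi(w)=\Psi(w')$; $\mathfrak{J}(\mathcal{A})=\{w\in\Sigma^\omega:\exists w'\sim w,\ w'\in\mathfrak{L}(\mathcal{A})\}$. $\mathbb{M}^\Sigma=\mathbb{N}_\infty^\Sigma\setminus\mathbb{N}^\Sigma$. A mask is $\mathfrak{m}\in\{0,\infty\}^\Sigma\setminus\{\vec 0\}$; $\vec x\oplus\mathfrak{m}$ has coordinate $\vec x(\sigma)$ where $\mathfrak{m}(\sigma)=0$ and $\infty$ elsewhere. A masked semilinear set is $\bigcup_{\mathfrak{m}}\{\vec x\oplus\mathfrak{m}:\vec x\in S_\mathfrak{m}\}$ over all masks, with each $S_\mathfrak{m}\subseteq\mathbb{N}^\Sigma$ semilinear (possibly empty). *)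

theory Defs
  imports Main "HOL-Library.Extended_Nat"
begin

text \<open>Alphabet: a finite type 'a (Sigma = UNIV). Infinite words: nat => 'a.
  Vectors in N_infinity^Sigma: 'a => enat; in N^Sigma: 'a => nat.\<close>

definition parikh :: "(nat \<Rightarrow> 'a) \<Rightarrow> ('a \<Rightarrow> enat)" where
  "parikh w = (\<lambda>\<sigma>. if finite {i. w i = \<sigma>} then enat (card {i. w i = \<sigma>}) else \<infinity>)"

text \<open>Nondeterministic Buchi automaton <Sigma, Q, delta, Q0, alpha>; states are natural
  numbers drawn from a finite set Q (no loss of generality, Q is finite).\<close>
record 'a nba =
  states :: "nat set"
  trans :: "nat \<Rightarrow> 'a \<Rightarrow> nat set"
  initial :: "nat set"
  accepting :: "nat set"

definition wf_nba :: "'a nba \<Rightarrow> bool" where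
  "wf_nba A \<longleftrightarrow> finite (states A) \<and> initial A \<subseteq> states A \<and> accepting A \<subseteq> states A
     \<and> (\<forall>q a. trans A q a \<subseteq> states A)"

definition accepting_run :: "'a nba \<Rightarrow> (nat \<Rightarrow> 'a) \<Rightarrow> (nat \<Rightarrow> nat) \<Rightarrow> bool" where
  "accepting_run A w r \<longleftrightarrow> r 0 \<in> initial A \<and> (\<forall>i. r (Suc i) \<in> trans A (r i) (w i))
     \<and> (\<exists>\<^sub>\<infinity> i. r i \<in> accepting A)"

definition lang :: "'a nba \<Rightarrow> (nat \<Rightarrow> 'a) set" where
  "lang A = {w. \<exists>r. accepting_run A w r}"

definition perm_closure :: "'a nba \<Rightarrow> (nat \<Rightarrow> 'a) set" where
  "perm_closure A = {w. \<exists>w'. parikh w' = parikh w \<and> w' \<in> lang A}"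

definition M_set :: "('a \<Rightarrow> enat) set" where
  "M_set = {v. \<exists>\<sigma>. v \<sigma> = \<infinity>}"

definition linear_set :: "('a \<Rightarrow> nat) \<Rightarrow> ('a \<Rightarrow> nat) set \<Rightarrow> ('a \<Rightarrow> nat) set" where
  "linear_set b P = {(\<lambda>\<sigma>. b \<sigma> + (\<Sum>p\<in>P. c p * p \<sigma>)) | c. True}"

definition semilinear :: "('a \<Rightarrow> nat) set \<Rightarrow> bool" where
  "semilinear S \<longleftrightarrow> (\<exists>L. finite L \<and> (\<forall>(b, P)\<in>L. finite P) \<and>
      S = (\<Union>(b, P)\<in>L. linear_set b P))"

text \<open>A mask is represented by the (nonempty) set of letters where it is infinity.\<close>
definition mask_add :: "('a \<Rightarrow> nat) \<Rightarrow> 'a set \<Rightarrow> ('a \<Rightarrow> enat)" where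
  "mask_add x m = (\<lambda>\<sigma>. if \<sigma> \<in> m then \<infinity> else enat (x \<sigma>))"

definition masked_semilinear :: "('a \<Rightarrow> enat) set \<Rightarrow> bool" where
  "masked_semilinear S \<longleftrightarrow> (\<exists>Sm :: 'a set \<Rightarrow> ('a \<Rightarrow> nat) set.
      (\<forall>m. m \<noteq> {} \<longrightarrow> semilinear (Sm m)) \<and>
      S = (\<Union>m\<in>{m. m \<noteq> {}}. (\<lambda>x. mask_add x m) ` Sm m))"

end

theory Submission
  imports Defs "HOL-Library.Infinite_Set" "HOL-Library.Countable" "HOL-Library.Function_Algebras"
begin

definition ssum :: "('a \<Rightarrow> nat) set \<Rightarrow> ('a \<Rightarrow> nat) set \<Rightarrow> ('a \<Rightarrow> nat) set" where
  "ssum A B = {a + b | a b. a \<in> A \<and> b \<in> B}"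

inductive_set vstar :: "('a \<Rightarrow> nat) set \<Rightarrow> ('a \<Rightarrow> nat) set" for T where
  vs0: "0 \<in> vstar T"
| vs1: "t \<in> T \<Longrightarrow> s \<in> vstar T \<Longrightarrow> t + s \<in> vstar T"

lemma semilinear_empty: "semilinear {}"
  unfolding semilinear_def by (rule exI[of _ "{}"]) auto

lemma semilinear_Un: "semilinear A \<Longrightarrow> semilinear B \<Longrightarrow> semilinear (A \<union> B)"
  unfolding semilinear_def
proof (elim exE conjE)
  fix L1 L2 assume "finite L1" "\<forall>(b, P)\<in>L1. finite P" "A = (\<Union>(b, P)\<in>L1. linear_set b P)"
    "finite L2" "\<forall>(b, P)\<in>L2. finite P" "B = (\<Union>(b, P)\<in>L2. linear_set b P)"
  then show "\<exists>L. finite L \<and> (\<forall>(b, P)\<in>L. finite P) \<and> A \<union> B = (\<Union>(b, P)\<in>L. linear_set b P)"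
    by (intro exI[of _ "L1 \<union> L2"]) auto
qed

lemma linear_single: "linear_set v {} = {v}"
  unfolding linear_set_def by auto

lemma semilinear_lin: "finite P \<Longrightarrow> semilinear (linear_set b P)"
  unfolding semilinear_def by (intro exI[of _ "{(b,P)}"]) auto

lemma semilinear_finite: "finite A \<Longrightarrow> semilinear A"
proof (induction A rule: finite_induct)
  case empty then show ?case by (rule semilinear_empty)
next
  case (insert v A)
  have "insert v A = linear_set v {} \<union> A" by (simp add: linear_single)
  then show ?case using semilinear_Un[OF semilinear_lin[of "{}" v] insert.IH] by simp
qed

lemma semilinear_UN: "finite F \<Longrightarrow> (\<And>x. x \<in> F \<Longrightarrow> semilinear (f x)) \<Longrightarrow> semilinear (\<Union>x\<in>F. f x)"
  by (induction F rule: finite_induct) (auto intro: semilinear_empty semilinear_Un)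

lemma lin_mono: assumes "finite P'" "P \<subseteq> P'" shows "linear_set b P \<subseteq> linear_set b P'"
proof
  fix x assume "x \<in> linear_set b P"
  then obtain c where x: "x = (\<lambda>\<sigma>. b \<sigma> + (\<Sum>p\<in>P. c p * p \<sigma>))" unfolding linear_set_def by auto
  have "\<And>\<sigma>. (\<Sum>p\<in>P'. (if p \<in> P then c p else 0) * p \<sigma>) = (\<Sum>p\<in>P. c p * p \<sigma>)"
  proof -
    fix \<sigma>
    have "(\<Sum>p\<in>P'. (if p \<in> P then c p else 0) * p \<sigma>) = (\<Sum>p\<in>P'. if p \<in> P then c p * p \<sigma> else 0)"
      by (rule sum.cong) auto
    also have "\<dots> = (\<Sum>p\<in>P' \<inter> P. c p * p \<sigma>)" using assms(1) by (simp add: sum.inter_restrict)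
    also have "P' \<inter> P = P" using assms(2) by auto
    finally show "?thesis \<sigma>" .
  qed
  then show "x \<in> linear_set b P'" unfolding linear_set_def x
    by (intro CollectI exI[of _ "\<lambda>p. if p \<in> P then c p else 0"]) auto
qed

lemma lin_sum: assumes "finite P1" "finite P2"
  shows "ssum (linear_set b1 P1) (linear_set b2 P2) = linear_set (b1 + b2) (P1 \<union> P2)"
proof
  show "ssum (linear_set b1 P1) (linear_set b2 P2) \<subseteq> linear_set (b1 + b2) (P1 \<union> P2)"
  proof
    fix z assume "z \<in> ssum (linear_set b1 P1) (linear_set b2 P2)"
    then obtain c1 c2 where z: "z = (\<lambda>\<sigma>. b1 \<sigma> + (\<Sum>p\<in>P1. c1 p * p \<sigma>)) + (\<lambda>\<sigma>. b2 \<sigma> + (\<Sum>p\<in>P2. c2 p * p \<sigma>))"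
      unfolding ssum_def linear_set_def by auto
    define c where "c = (\<lambda>p. (if p \<in> P1 then c1 p else 0) + (if p \<in> P2 then c2 p else 0))"
    have "\<And>\<sigma>. (\<Sum>p\<in>P1 \<union> P2. c p * p \<sigma>) = (\<Sum>p\<in>P1. c1 p * p \<sigma>) + (\<Sum>p\<in>P2. c2 p * p \<sigma>)"
    proof -
      fix \<sigma>
      have "(\<Sum>p\<in>P1 \<union> P2. c p * p \<sigma>) = (\<Sum>p\<in>P1 \<union> P2. (if p \<in> P1 then c1 p * p \<sigma> else 0) + (if p \<in> P2 then c2 p * p \<sigma> else 0))"
        unfolding c_def by (rule sum.cong) (auto simp: algebra_simps)
      also have "\<dots> = (\<Sum>p\<in>P1 \<union> P2. (if p \<in> P1 then c1 p * p \<sigma> else 0)) + (\<Sum>p\<in>P1 \<union> P2. (if p \<in> P2 then c2 p * p \<sigma> else 0))"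
        by (rule sum.distrib)
      also have "\<dots> = (\<Sum>p\<in>(P1 \<union> P2) \<inter> P1. c1 p * p \<sigma>) + (\<Sum>p\<in>(P1 \<union> P2) \<inter> P2. c2 p * p \<sigma>)"
        using assms by (simp only: sum.inter_restrict finite_Un)
      also have "(P1 \<union> P2) \<inter> P1 = P1" by auto
      also have "(P1 \<union> P2) \<inter> P2 = P2" by auto
      finally show "?thesis \<sigma>" .
    qed
    then show "z \<in> linear_set (b1 + b2) (P1 \<union> P2)" unfolding linear_set_def z
      by (intro CollectI exI[of _ c]) (auto simp: algebra_simps)
  qed
next
  show "linear_set (b1 + b2) (P1 \<union> P2) \<subseteq> ssum (linear_set b1 P1) (linear_set b2 P2)"
  proof
    fix z assume "z \<in> linear_set (b1 + b2) (P1 \<union> P2)"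
    then obtain c where z: "z = (\<lambda>\<sigma>. (b1 + b2) \<sigma> + (\<Sum>p\<in>P1 \<union> P2. c p * p \<sigma>))" unfolding linear_set_def by auto
    define c2 where "c2 = (\<lambda>p. if p \<in> P1 then 0 else c p)"
    have "\<And>\<sigma>. (\<Sum>p\<in>P1 \<union> P2. c p * p \<sigma>) = (\<Sum>p\<in>P1. c p * p \<sigma>) + (\<Sum>p\<in>P2. c2 p * p \<sigma>)"
    proof -
      fix \<sigma>
      have "P1 \<union> P2 = P1 \<union> (P2 - P1)" by auto
      then have "(\<Sum>p\<in>P1 \<union> P2. c p * p \<sigma>) = (\<Sum>p\<in>P1 \<union> (P2 - P1). c p * p \<sigma>)" by simp
      also have "\<dots> = (\<Sum>p\<in>P1. c p * p \<sigma>) + (\<Sum>p\<in>P2 - P1. c p * p \<sigma>)"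
        using assms by (intro sum.union_disjoint) auto
      finally have "(\<Sum>p\<in>P1 \<union> P2. c p * p \<sigma>) = (\<Sum>p\<in>P1. c p * p \<sigma>) + (\<Sum>p\<in>P2 - P1. c p * p \<sigma>)" .
      moreover have "(\<Sum>p\<in>P2. c2 p * p \<sigma>) = (\<Sum>p\<in>P2. if p \<in> P2 - P1 then c p * p \<sigma> else 0)"
        unfolding c2_def by (rule sum.cong) auto
      moreover have "\<dots> = (\<Sum>p\<in>P2 \<inter> (P2 - P1). c p * p \<sigma>)" using assms by (simp add: sum.inter_restrict)
      moreover have "P2 \<inter> (P2 - P1) = P2 - P1" by auto
      ultimately show "?thesis \<sigma>" by simp
    qed
    then have "z = (\<lambda>\<sigma>. b1 \<sigma> + (\<Sum>p\<in>P1. c p * p \<sigma>)) + (\<lambda>\<sigma>. b2 \<sigma> + (\<Sum>p\<in>P2. c2 p * p \<sigma>))"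
      unfolding z by (auto simp: algebra_simps)
    then show "z \<in> ssum (linear_set b1 P1) (linear_set b2 P2)" unfolding ssum_def linear_set_def by blast
  qed
qed

lemma ssum_UN: "ssum (\<Union>x\<in>F. A x) (\<Union>y\<in>G. B y) = (\<Union>(x,y)\<in>F \<times> G. ssum (A x) (B y))"
  unfolding ssum_def by blast

lemma semilinear_ssum: assumes "semilinear A" "semilinear B" shows "semilinear (ssum A B)"
proof -
  from assms obtain L1 L2 where L: "finite L1" "\<forall>(b, P)\<in>L1. finite P" "A = (\<Union>(b, P)\<in>L1. linear_set b P)"
    "finite L2" "\<forall>(b, P)\<in>L2. finite P" "B = (\<Union>(b, P)\<in>L2. linear_set b P)"
    unfolding semilinear_def by blast
  have "ssum A B = (\<Union>(x,y)\<in>L1 \<times> L2. ssum (case x of (b, P) \<Rightarrow> linear_set b P) (case y of (b, P) \<Rightarrow> linear_set b P))"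
    unfolding L(3,6) by (rule ssum_UN)
  also have "\<dots> = (\<Union>(x,y)\<in>L1 \<times> L2. linear_set (fst x + fst y) (snd x \<union> snd y))"
    using L(2,5) by (intro SUP_cong refl) (auto simp: lin_sum split: prod.splits)
  finally have eq: "ssum A B = \<dots>" .
  show ?thesis unfolding eq using L(1,4)
    by (intro semilinear_UN) (auto intro!: semilinear_lin dest: L(2)[rule_format] L(5)[rule_format])
qed

lemma vstar_add: "s1 \<in> vstar T \<Longrightarrow> s2 \<in> vstar T \<Longrightarrow> s1 + s2 \<in> vstar T"
  by (induction s1 rule: vstar.induct) (auto simp: add.assoc intro: vstar.intros)

lemma vstar_mono: "s \<in> vstar A \<Longrightarrow> A \<subseteq> B \<Longrightarrow> s \<in> vstar B"
  by (induction s rule: vstar.induct) (auto intro: vstar.intros)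

lemma vstar_Un: "vstar (A \<union> B) = ssum (vstar A) (vstar B)"
proof
  show "vstar (A \<union> B) \<subseteq> ssum (vstar A) (vstar B)"
  proof
    fix s assume "s \<in> vstar (A \<union> B)"
    then show "s \<in> ssum (vstar A) (vstar B)"
    proof (induction s rule: vstar.induct)
      case vs0 then show ?case unfolding ssum_def by (auto intro!: exI[of _ 0] vstar.intros)
    next
      case (vs1 t s)
      then obtain a b where s: "s = a + b" "a \<in> vstar A" "b \<in> vstar B" unfolding ssum_def by auto
      show ?case
      proof (cases "t \<in> A")
        case True
        then have "t + s = (t + a) + b" "t + a \<in> vstar A" using s by (auto simp: add.assoc intro: vstar.intros)
        then show ?thesis using s unfolding ssum_def by blast
      next
        case False
        then have "t \<in> B" using vs1 by auto
        then have "t + b \<in> vstar B" using s by (auto intro: vstar.intros)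
        moreover have "t + s = a + (t + b)" using s by (simp add: add_ac)
        ultimately show ?thesis using s unfolding ssum_def by blast
      qed
    qed
  qed
next
  show "ssum (vstar A) (vstar B) \<subseteq> vstar (A \<union> B)"
    unfolding ssum_def by (auto intro!: vstar_add elim: vstar_mono)
qed

lemma vstar_empty: "vstar {} = {0}"
proof -
  have "s \<in> vstar {} \<Longrightarrow> s = 0" for s by (induction s rule: vstar.induct) auto
  then show ?thesis by (auto intro: vstar.intros)
qed

lemma vstar_lin: assumes "finite P" shows "vstar (linear_set b P) = {0} \<union> linear_set b (insert b P)"
proof
  show "vstar (linear_set b P) \<subseteq> {0} \<union> linear_set b (insert b P)"
  proof
    fix s assume "s \<in> vstar (linear_set b P)"
    then show "s \<in> {0} \<union> linear_set b (insert b P)"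
    proof (induction s rule: vstar.induct)
      case vs0 then show ?case by simp
    next
      case (vs1 t s)
      then obtain c where t: "t = (\<lambda>\<sigma>. b \<sigma> + (\<Sum>p\<in>P. c p * p \<sigma>))" unfolding linear_set_def by auto
      from vs1(3) show ?case
      proof
        assume "s \<in> {0}"
        then show ?thesis using vs1(1) lin_mono[of "insert b P" P b] assms by auto
      next
        assume "s \<in> linear_set b (insert b P)"
        then obtain d where s: "s = (\<lambda>\<sigma>. b \<sigma> + (\<Sum>p\<in>insert b P. d p * p \<sigma>))" unfolding linear_set_def by auto
        define d' where "d' = (\<lambda>p. d p + (if p \<in> P then c p else 0) + (if p = b then 1 else 0))"
        have "\<And>\<sigma>. (\<Sum>p\<in>insert b P. d' p * p \<sigma>) = (\<Sum>p\<in>insert b P. d p * p \<sigma>) + (\<Sum>p\<in>P. c p * p \<sigma>) + b \<sigma>"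
        proof -
          fix \<sigma>
          have "(\<Sum>p\<in>insert b P. d' p * p \<sigma>) = (\<Sum>p\<in>insert b P. d p * p \<sigma>) + (\<Sum>p\<in>insert b P. if p \<in> P then c p * p \<sigma> else 0) + (\<Sum>p\<in>insert b P. if p = b then p \<sigma> else 0)"
            unfolding sum.distrib[symmetric] d'_def by (rule sum.cong) (auto simp: algebra_simps)
          also have "(\<Sum>p\<in>insert b P. if p \<in> P then c p * p \<sigma> else 0) = (\<Sum>p\<in>insert b P \<inter> P. c p * p \<sigma>)"
            using assms by (simp add: sum.inter_restrict)
          also have "insert b P \<inter> P = P" by auto
          also have "(\<Sum>p\<in>insert b P. if p = b then p \<sigma> else 0) = b \<sigma>" using assms by (simp add: sum.delta)
          finally show "?thesis \<sigma>" .
        qed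
        then have "t + s = (\<lambda>\<sigma>. b \<sigma> + (\<Sum>p\<in>insert b P. d' p * p \<sigma>))" unfolding t s by (auto simp: algebra_simps)
        then show ?thesis unfolding linear_set_def by blast
      qed
    qed
  qed
next
  show "{0} \<union> linear_set b (insert b P) \<subseteq> vstar (linear_set b P)"
  proof
    fix x assume "x \<in> {0} \<union> linear_set b (insert b P)"
    then show "x \<in> vstar (linear_set b P)"
    proof
      assume "x \<in> {0}" then show ?thesis by (auto intro: vstar.intros)
    next
      assume "x \<in> linear_set b (insert b P)"
      then obtain d where x: "x = (\<lambda>\<sigma>. b \<sigma> + (\<Sum>p\<in>insert b P. d p * p \<sigma>))" unfolding linear_set_def by auto
      show ?thesis
      proof (cases "b \<in> P")
        case True
        then have "x \<in> linear_set b P" using x insert_absorb[OF True] unfolding linear_set_def by auto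
        then show ?thesis using vstar.vs1[OF _ vstar.vs0] by fastforce
      next
        case False
        define y where "y = (\<lambda>\<sigma>. b \<sigma> + (\<Sum>p\<in>P. d p * p \<sigma>))"
        have y: "y \<in> linear_set b P" unfolding y_def linear_set_def by blast
        have bl: "b \<in> linear_set b P" unfolding linear_set_def by (auto intro!: exI[of _ "\<lambda>_. 0"])
        have "(\<lambda>\<sigma>. k * b \<sigma>) + y \<in> vstar (linear_set b P)" for k
        proof (induction k)
          case 0
          have "(\<lambda>\<sigma>. 0 * b \<sigma>) + y = y + 0" by (simp add: zero_fun_def[symmetric])
          then show ?case using vstar.vs1[OF y vstar.vs0] by simp
        next
          case (Suc k)
          have eq: "(\<lambda>\<sigma>. Suc k * b \<sigma>) + y = b + ((\<lambda>\<sigma>. k * b \<sigma>) + y)" by (auto simp: algebra_simps)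
          show ?case unfolding eq by (rule vstar.vs1[OF bl Suc])
        qed
        moreover have "x = (\<lambda>\<sigma>. d b * b \<sigma>) + y" unfolding x y_def using False assms
          by (auto simp: algebra_simps)
        ultimately show ?thesis by simp
      qed
    qed
  qed
qed

lemma semilinear_vstar: assumes "semilinear T" shows "semilinear (vstar T)"
proof -
  from assms obtain L where L: "finite L" "\<forall>(b, P)\<in>L. finite P" "T = (\<Union>(b, P)\<in>L. linear_set b P)"
    unfolding semilinear_def by blast
  have "\<forall>(b, P)\<in>L. finite P \<Longrightarrow> semilinear (vstar (\<Union>(b, P)\<in>L. linear_set b P))"
    using L(1)
  proof (induction L rule: finite_induct)
    case empty then show ?case using semilinear_finite[of "{0}"] by (simp add: vstar_empty)
  next
    case (insert x F)
    obtain b P where x: "x = (b, P)" by force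
    have fP: "finite P" using insert.prems x by auto
    have "vstar (\<Union>(b, P)\<in>insert x F. linear_set b P) = ssum (vstar (linear_set b P)) (vstar (\<Union>(b, P)\<in>F. linear_set b P))"
      by (simp add: x vstar_Un)
    moreover have "semilinear (vstar (linear_set b P))"
      unfolding vstar_lin[OF fP] using fP
      by (intro semilinear_Un semilinear_finite semilinear_lin) auto
    ultimately show ?case using insert by (auto intro: semilinear_ssum)
  qed
  then show ?thesis using L by simp
qed


definition unitv :: "'a \<Rightarrow> 'a \<Rightarrow> nat" where
  "unitv a = (\<lambda>\<tau>. if \<tau> = a then 1 else 0)"

inductive reach :: "('q \<Rightarrow> 'a \<Rightarrow> 'q set) \<Rightarrow> 'q set \<Rightarrow> 'q \<Rightarrow> ('a \<Rightarrow> nat) \<Rightarrow> 'q \<Rightarrow> bool"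
  for \<delta> X where
  r0: "reach \<delta> X p 0 p"
| r1: "q \<in> \<delta> p a \<Longrightarrow> reach \<delta> X p (unitv a) q"
| r2: "s \<in> X \<Longrightarrow> reach \<delta> X p v s \<Longrightarrow> reach \<delta> X s v' q \<Longrightarrow> reach \<delta> X p (v + v') q"

definition RR where "RR \<delta> X p q = {v. reach \<delta> X p v q}"

lemma reach_mono: "reach \<delta> X p v q \<Longrightarrow> X \<subseteq> Y \<Longrightarrow> reach \<delta> Y p v q"
  by (induction rule: reach.induct) (auto intro: reach.intros)

lemma star_reach: "z \<in> vstar (RR \<delta> X s s) \<Longrightarrow> reach \<delta> (insert s X) s z s"
proof (induction z rule: vstar.induct)
  case vs0 then show ?case by (rule r0)
next
  case (vs1 t z)
  then have "reach \<delta> (insert s X) s t s" unfolding RR_def by (auto intro: reach_mono)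
  from r2[OF insertI1 this vs1.IH] show ?case .
qed

lemma decomp:
  assumes "reach \<delta> (insert s X) p v q"
  shows "reach \<delta> X p v q \<or> (\<exists>a z c. v = a + z + c \<and> reach \<delta> X p a s \<and> z \<in> vstar (RR \<delta> X s s) \<and> reach \<delta> X s c q)"
  using assms
proof (induction rule: reach.induct)
  case (r0 p) show ?case by (rule disjI1, rule reach.r0)
next
  case (r1 q p a) then show ?case by (intro disjI1 reach.r1)
next
  case (r2 t p v1 v2 q)
  show ?case
  proof (cases "t = s")
    case True
    obtain a z where az: "v1 = a + z" "reach \<delta> X p a s" "z \<in> vstar (RR \<delta> X s s)"
    proof -
      from r2.IH(1) show ?thesis
      proof
        assume "reach \<delta> X p v1 t"
        then show ?thesis using that[of v1 0] True by (auto intro: vstar.intros)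
      next
        assume "\<exists>a z c. v1 = a + z + c \<and> reach \<delta> X p a s \<and> z \<in> vstar (RR \<delta> X s s) \<and> reach \<delta> X s c t"
        then obtain a z c where h: "v1 = a + z + c" "reach \<delta> X p a s" "z \<in> vstar (RR \<delta> X s s)" "reach \<delta> X s c t" by blast
        have "c + z \<in> vstar (RR \<delta> X s s)" using h True by (auto simp: RR_def intro: vstar.intros)
        moreover have "v1 = a + (c + z)" using h by (simp add: add_ac)
        ultimately show ?thesis using that h by blast
      qed
    qed
    obtain z' c' where zc: "v2 = z' + c'" "reach \<delta> X s c' q" "z' \<in> vstar (RR \<delta> X s s)"
    proof -
      from r2.IH(2) show ?thesis
      proof
        assume "reach \<delta> X t v2 q"
        then show ?thesis using that[of 0 v2] True by (auto intro: vstar.intros)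
      next
        assume "\<exists>a z c. v2 = a + z + c \<and> reach \<delta> X t a s \<and> z \<in> vstar (RR \<delta> X s s) \<and> reach \<delta> X s c q"
        then obtain a z c where h: "v2 = a + z + c" "reach \<delta> X t a s" "z \<in> vstar (RR \<delta> X s s)" "reach \<delta> X s c q" by blast
        have "a + z \<in> vstar (RR \<delta> X s s)" using h True by (auto simp: RR_def intro: vstar.intros)
        then show ?thesis using that h by blast
      qed
    qed
    have "v1 + v2 = a + (z + z') + c'" using az zc by (simp add: add_ac)
    moreover have "z + z' \<in> vstar (RR \<delta> X s s)" using az zc by (auto intro: vstar_add)
    ultimately show ?thesis using az zc by blast
  next
    case False
    then have tX: "t \<in> X" using r2.hyps by auto
    from r2.IH(1) show ?thesis
    proof
      assume L: "reach \<delta> X p v1 t"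
      from r2.IH(2) show ?thesis
      proof
        assume "reach \<delta> X t v2 q"
        from reach.r2[OF tX L this] show ?thesis by (rule disjI1)
      next
        assume "\<exists>a z c. v2 = a + z + c \<and> reach \<delta> X t a s \<and> z \<in> vstar (RR \<delta> X s s) \<and> reach \<delta> X s c q"
        then obtain a z c where h: "v2 = a + z + c" "reach \<delta> X t a s" "z \<in> vstar (RR \<delta> X s s)" "reach \<delta> X s c q" by blast
        have "reach \<delta> X p (v1 + a) s" using L h tX by (auto intro: reach.r2)
        moreover have "v1 + v2 = (v1 + a) + z + c" using h by (simp add: add_ac)
        ultimately show ?thesis using h by blast
      qed
    next
      assume "\<exists>a z c. v1 = a + z + c \<and> reach \<delta> X p a s \<and> z \<in> vstar (RR \<delta> X s s) \<and> reach \<delta> X s c t"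
      then obtain a z c where h: "v1 = a + z + c" "reach \<delta> X p a s" "z \<in> vstar (RR \<delta> X s s)" "reach \<delta> X s c t" by blast
      from r2.IH(2) show ?thesis
      proof
        assume R: "reach \<delta> X t v2 q"
        have "reach \<delta> X s (c + v2) q" using R h tX by (auto intro: reach.r2)
        moreover have "v1 + v2 = a + z + (c + v2)" using h by (simp add: add_ac)
        ultimately show ?thesis using h by blast
      next
        assume "\<exists>a z c. v2 = a + z + c \<and> reach \<delta> X t a s \<and> z \<in> vstar (RR \<delta> X s s) \<and> reach \<delta> X s c q"
        then obtain a' z' c' where h': "v2 = a' + z' + c'" "reach \<delta> X t a' s" "z' \<in> vstar (RR \<delta> X s s)" "reach \<delta> X s c' q" by blast
        have "c + a' \<in> RR \<delta> X s s" using h h' tX by (auto simp: RR_def intro: reach.r2)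
        then have "z + ((c + a') + z') \<in> vstar (RR \<delta> X s s)" using h h' by (auto intro: vstar_add vstar.intros)
        moreover have "v1 + v2 = a + (z + ((c + a') + z')) + c'" using h h' by (simp add: add_ac)
        ultimately show ?thesis using h h' by blast
      qed
    qed
  qed
qed

lemma RR_insert:
  "RR \<delta> (insert s X) p q = RR \<delta> X p q \<union> ssum (ssum (RR \<delta> X p s) (vstar (RR \<delta> X s s))) (RR \<delta> X s q)"
proof
  show "RR \<delta> (insert s X) p q \<subseteq> RR \<delta> X p q \<union> ssum (ssum (RR \<delta> X p s) (vstar (RR \<delta> X s s))) (RR \<delta> X s q)"
    using decomp[of \<delta> s X p _ q] unfolding RR_def ssum_def by blast
next
  have "reach \<delta> (insert s X) p (a + z + c) q" if "reach \<delta> X p a s" "z \<in> vstar (RR \<delta> X s s)" "reach \<delta> X s c q" for a z c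
  proof -
    have "reach \<delta> (insert s X) p a s" "reach \<delta> (insert s X) s c q"
      using that by (auto intro: reach_mono)
    moreover have "reach \<delta> (insert s X) s z s" using that(2) by (rule star_reach)
    ultimately show ?thesis by (meson insertI1 r2)
  qed
  then show "RR \<delta> X p q \<union> ssum (ssum (RR \<delta> X p s) (vstar (RR \<delta> X s s))) (RR \<delta> X s q) \<subseteq> RR \<delta> (insert s X) p q"
    unfolding RR_def ssum_def by (auto intro: reach_mono)
qed

lemma RR_empty: "RR \<delta> {} p q \<subseteq> insert 0 (range unitv)"
proof -
  have "reach \<delta> {} p v q \<Longrightarrow> v \<in> insert 0 (range unitv)" for v
    by (induction rule: reach.induct) auto
  then show ?thesis unfolding RR_def by auto
qed

lemma semilinear_RR:
  fixes \<delta> :: "'q \<Rightarrow> 'a::finite \<Rightarrow> 'q set"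
  assumes "finite X" shows "semilinear (RR \<delta> X p q)"
  using assms
proof (induction X arbitrary: p q rule: finite_induct)
  case empty
  show ?case by (rule semilinear_finite) (rule finite_subset[OF RR_empty]; simp)
next
  case (insert s X)
  show ?case unfolding RR_insert
    by (intro semilinear_Un semilinear_ssum semilinear_vstar insert.IH)
qed


fun steps :: "('q \<Rightarrow> 'a \<Rightarrow> 'q set) \<Rightarrow> 'q \<Rightarrow> 'a list \<Rightarrow> 'q \<Rightarrow> bool" where
  "steps \<delta> p [] q = (p = q)"
| "steps \<delta> p (a # xs) q = (\<exists>s \<in> \<delta> p a. steps \<delta> s xs q)"

definition cv :: "'a list \<Rightarrow> 'a \<Rightarrow> nat" where "cv xs = (\<lambda>\<sigma>. count_list xs \<sigma>)"

lemma cv_Nil: "cv [] = 0" by (auto simp: cv_def)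
lemma cv_Cons: "cv (a # xs) = unitv a + cv xs" by (auto simp: cv_def unitv_def)
lemma cv_append: "cv (xs @ ys) = cv xs + cv ys" by (auto simp: cv_def)

lemma steps_append: "steps \<delta> p (xs @ ys) q \<longleftrightarrow> (\<exists>s. steps \<delta> p xs s \<and> steps \<delta> s ys q)"
  by (induction xs arbitrary: p) auto

lemma steps_reach: "steps \<delta> p xs q \<Longrightarrow> (\<And>p a. \<delta> p a \<subseteq> X) \<Longrightarrow> reach \<delta> X p (cv xs) q"
proof (induction xs arbitrary: p)
  case Nil
  then have "p = q" by simp
  then show ?case unfolding cv_Nil using reach.r0 by metis
next
  case (Cons a xs)
  then obtain s where s: "s \<in> \<delta> p a" "steps \<delta> s xs q" by auto
  have "s \<in> X" using s Cons.prems(2) by blast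
  moreover have "reach \<delta> X p (unitv a) s" by (rule reach.r1) (rule s(1))
  ultimately have "reach \<delta> X p (unitv a + cv xs) q" using Cons.IH[OF s(2) Cons.prems(2)] by (rule reach.r2)
  then
  show ?case by (simp only: cv_Cons)
qed

lemma reach_steps: "reach \<delta> X p v q \<Longrightarrow> \<exists>xs. steps \<delta> p xs q \<and> cv xs = v"
proof (induction rule: reach.induct)
  case (r0 p) then show ?case by (intro exI[of _ "[]"]) (simp add: cv_Nil)
next
  case (r1 q p a) then show ?case by (intro exI[of _ "[a]"]) (auto simp: cv_Cons cv_Nil)
next
  case (r2 s p v v' q)
  then obtain xs ys where "steps \<delta> p xs s" "cv xs = v" "steps \<delta> s ys q" "cv ys = v'" by blast
  then show ?case by (intro exI[of _ "xs @ ys"]) (auto simp: steps_append cv_append)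
qed

lemma steps_run: "steps \<delta> p xs q \<Longrightarrow> \<exists>rs. length rs = Suc (length xs) \<and> rs ! 0 = p \<and> rs ! length xs = q
   \<and> (\<forall>i<length xs. rs ! Suc i \<in> \<delta> (rs ! i) (xs ! i))"
proof (induction xs arbitrary: p)
  case Nil then show ?case by (intro exI[of _ "[p]"]) auto
next
  case (Cons a xs)
  then obtain s where s: "s \<in> \<delta> p a" "steps \<delta> s xs q" by auto
  from Cons.IH[OF s(2)] obtain rs where rs: "length rs = Suc (length xs)" "rs ! 0 = s" "rs ! length xs = q"
    "\<forall>i<length xs. rs ! Suc i \<in> \<delta> (rs ! i) (xs ! i)" by blast
  show ?case
  proof (intro exI[of _ "p # rs"] conjI allI impI)
    fix i assume "i < length (a # xs)"
    then show "(p # rs) ! Suc i \<in> \<delta> ((p # rs) ! i) ((a # xs) ! i)"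
      using rs s by (cases i) auto
  qed (use rs in auto)
qed

lemma run_steps: "(\<forall>i<n. r (Suc i) \<in> \<delta> (r i) (w i)) \<Longrightarrow> steps \<delta> (r 0) (map w [0..<n]) (r n)"
proof (induction n)
  case 0 then show ?case by simp
next
  case (Suc n)
  then show ?case by (auto simp: steps_append)
qed

lemma card_count: "card {i. i < n \<and> w i = \<sigma>} = count_list (map w [0..<n]) \<sigma>"
proof (induction n)
  case 0 then show ?case by simp
next
  case (Suc n)
  have "{i. i < Suc n \<and> w i = \<sigma>} = {i. i < n \<and> w i = \<sigma>} \<union> (if w n = \<sigma> then {n} else {})" by (auto simp: less_Suc_eq)
  then show ?case using Suc by (auto simp: card_insert_if)
qed

lemma parikh_mask:
  assumes "\<forall>\<sigma>\<in>m. infinite {i. w i = \<sigma>}" "\<forall>i\<ge>n. w i \<in> m"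
  shows "parikh w = mask_add (cv (map w [0..<n])) m"
proof
  fix \<sigma>
  show "parikh w \<sigma> = mask_add (cv (map w [0..<n])) m \<sigma>"
  proof (cases "\<sigma> \<in> m")
    case True then show ?thesis using assms(1) by (simp add: parikh_def mask_add_def)
  next
    case False
    then have "{i. w i = \<sigma>} = {i. i < n \<and> w i = \<sigma>}" using assms(2) by (auto) (meson not_less)
    then show ?thesis using False by (simp add: parikh_def mask_add_def card_count cv_def)
  qed
qed

lemma INFM_shift: fixes P :: "nat \<Rightarrow> bool" assumes "\<exists>\<^sub>\<infinity>i. P i" shows "\<exists>\<^sub>\<infinity>i. P (N + i)"
proof -
  have h: "\<forall>m. \<exists>n>m. P n" using assms by (simp add: INFM_nat)
  have "\<forall>m. \<exists>n>m. P (N + n)"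
  proof
    fix m obtain n where "n > m + N" "P n" using h by blast
    then show "\<exists>n>m. P (N + n)" by (intro exI[of _ "n - N"]) auto
  qed
  then show ?thesis by (simp add: INFM_nat)
qed

lemma INFM_unshift: fixes P :: "nat \<Rightarrow> bool" assumes "\<exists>\<^sub>\<infinity>i. P i" shows "\<exists>\<^sub>\<infinity>i. P (i - N)"
proof -
  have h: "\<forall>m. \<exists>n>m. P n" using assms by (simp add: INFM_nat)
  have "\<forall>m. \<exists>n>m. P (n - N)"
  proof
    fix m obtain n where "n > m" "P n" using h by blast
    then show "\<exists>n>m. P (n - N)" by (intro exI[of _ "n + N"]) auto
  qed
  then show ?thesis by (simp add: INFM_nat)
qed

definition good :: "'a nba \<Rightarrow> 'a set \<Rightarrow> nat \<Rightarrow> bool" where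
  "good A m q \<longleftrightarrow> (\<exists>w r. r 0 = q \<and> (\<forall>i. r (Suc i) \<in> trans A (r i) (w i)) \<and> (\<exists>\<^sub>\<infinity>i. r i \<in> accepting A)
     \<and> (\<forall>i. w i \<in> m) \<and> (\<forall>\<sigma>\<in>m. \<exists>\<^sub>\<infinity>i. w i = \<sigma>))"

definition Sm :: "'a nba \<Rightarrow> 'a set \<Rightarrow> ('a \<Rightarrow> nat) set" where
  "Sm A m = (\<Union>(q0, q) \<in> initial A \<times> {q \<in> states A. good A m q}. RR (trans A) (states A) q0 q)"

lemma perm_closure_parikh: "parikh ` perm_closure A = parikh ` lang A"
proof
  show "parikh ` perm_closure A \<subseteq> parikh ` lang A"
  proof
    fix y assume "y \<in> parikh ` perm_closure A"
    then obtain x w' where "y = parikh x" "parikh w' = parikh x" "w' \<in> lang A" unfolding perm_closure_def by blast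
    then show "y \<in> parikh ` lang A" by (metis image_eqI)
  qed
  show "parikh ` lang A \<subseteq> parikh ` perm_closure A"
    unfolding perm_closure_def by blast
qed

lemma Sm_semilinear:
  fixes A :: "'a::finite nba"
  assumes wf: "wf_nba A" shows "semilinear (Sm A m)"
proof -
  have fin: "finite (states A)" "finite (initial A)" using wf by (auto simp: wf_nba_def intro: finite_subset)
  show ?thesis unfolding Sm_def
    by (rule semilinear_UN) (use fin in \<open>auto intro: semilinear_RR\<close>)
qed


lemma INFM_offset: fixes P Q :: "nat \<Rightarrow> bool"
  assumes "\<exists>\<^sub>\<infinity>i. P i" "\<And>i. P i \<Longrightarrow> Q (i + n)" shows "\<exists>\<^sub>\<infinity>i. Q i"
proof -
  have h: "\<forall>m. \<exists>i>m. P i" using assms(1) by (simp add: INFM_nat)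
  have "\<forall>m. \<exists>j>m. Q j"
  proof
    fix m obtain i where "i > m" "P i" using h by blast
    then show "\<exists>j>m. Q j" using assms(2) by (intro exI[of _ "i + n"]) auto
  qed
  then show ?thesis by (simp add: INFM_nat)
qed

lemma lang_char:
  fixes A :: "'a::finite nba"
  assumes wf: "wf_nba A"
  shows "parikh ` lang A = (\<Union>m\<in>{m. m \<noteq> {}}. (\<lambda>x. mask_add x m) ` Sm A m)"
proof
  show "parikh ` lang A \<subseteq> (\<Union>m\<in>{m. m \<noteq> {}}. (\<lambda>x. mask_add x m) ` Sm A m)"
  proof
    fix y assume "y \<in> parikh ` lang A"
    then obtain w r where y: "y = parikh w" and run: "r 0 \<in> initial A" "\<forall>i. r (Suc i) \<in> trans A (r i) (w i)"
      "\<exists>\<^sub>\<infinity>i. r i \<in> accepting A"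
      unfolding lang_def accepting_run_def by blast
    define m where "m = {\<sigma>. infinite {i. w i = \<sigma>}}"
    have "finite (\<Union>\<sigma>\<in>-m. {i. w i = \<sigma>})" unfolding m_def by auto
    then obtain N where N: "\<forall>i\<in>(\<Union>\<sigma>\<in>-m. {i. w i = \<sigma>}). i < N" using finite_nat_set_iff_bounded by blast
    have wm: "\<forall>i\<ge>N. w i \<in> m" using N by (auto simp: not_less[symmetric])
    then have mne: "m \<noteq> {}" by auto
    have py: "y = mask_add (cv (map w [0..<N])) m" unfolding y by (rule parikh_mask) (use wm in \<open>auto simp: m_def\<close>)
    have rQ: "r N \<in> states A"
    proof (cases N)
      case 0 then show ?thesis using wf run unfolding wf_nba_def by auto
    next
      case (Suc k) then show ?thesis using wf run(2) unfolding wf_nba_def by blast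
    qed
    have gd: "good A m (r N)" unfolding good_def
    proof (intro exI[of _ "\<lambda>i. w (N + i)"] exI[of _ "\<lambda>i. r (N + i)"] conjI allI ballI)
      show "\<exists>\<^sub>\<infinity>i. r (N + i) \<in> accepting A" using run(3) by (rule INFM_shift)
      fix \<sigma> assume "\<sigma> \<in> m"
      then have "\<exists>\<^sub>\<infinity>i. w i = \<sigma>" unfolding m_def by (simp add: INFM_iff_infinite)
      then show "\<exists>\<^sub>\<infinity>i. w (N + i) = \<sigma>" by (rule INFM_shift)
    qed (use run wm in auto)
    have "reach (trans A) (states A) (r 0) (cv (map w [0..<N])) (r N)"
      by (rule steps_reach[OF run_steps]) (use run wf in \<open>auto simp: wf_nba_def\<close>)
    then have "cv (map w [0..<N]) \<in> Sm A m" unfolding Sm_def RR_def using run(1) rQ gd by blast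
    then show "y \<in> (\<Union>m\<in>{m. m \<noteq> {}}. (\<lambda>x. mask_add x m) ` Sm A m)" using py mne by blast
  qed
next
  show "(\<Union>m\<in>{m. m \<noteq> {}}. (\<lambda>x. mask_add x m) ` Sm A m) \<subseteq> parikh ` lang A"
  proof
    fix y assume "y \<in> (\<Union>m\<in>{m. m \<noteq> {}}. (\<lambda>x. mask_add x m) ` Sm A m)"
    then obtain m v where y: "y = mask_add v m" and vS: "v \<in> Sm A m" by blast
    from vS obtain q0 q where q0: "q0 \<in> initial A" and gd: "good A m q"
      and "v \<in> RR (trans A) (states A) q0 q"
      unfolding Sm_def by blast
    then have rch: "reach (trans A) (states A) q0 v q" unfolding RR_def by simp
    from reach_steps[OF rch] obtain xs where xs: "steps (trans A) q0 xs q" "cv xs = v" by blast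
    from steps_run[OF xs(1)] obtain rs where rs: "length rs = Suc (length xs)" "rs ! 0 = q0" "rs ! length xs = q"
      "\<forall>i<length xs. rs ! Suc i \<in> trans A (rs ! i) (xs ! i)" by blast
    from gd[unfolded good_def] obtain w' r' where g: "r' 0 = q" "\<forall>i. r' (Suc i) \<in> trans A (r' i) (w' i)" "\<exists>\<^sub>\<infinity>i. r' i \<in> accepting A"
      "\<forall>i. w' i \<in> m" "\<forall>\<sigma>\<in>m. \<exists>\<^sub>\<infinity>i. w' i = \<sigma>" by blast
    define n where "n = length xs"
    define w where "w = (\<lambda>i. if i < n then xs ! i else w' (i - n))"
    define r where "r = (\<lambda>i. if i < n then rs ! i else r' (i - n))"
    have r0: "r 0 = q0" using rs g unfolding r_def n_def by auto
    have rS: "r (Suc i) \<in> trans A (r i) (w i)" for i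
    proof (cases "Suc i < n")
      case True then show ?thesis using rs unfolding r_def w_def n_def by auto
    next
      case False
      show ?thesis
      proof (cases "i < n")
        case True
        then have si: "Suc i = n" using False by auto
        have "rs ! Suc i \<in> trans A (rs ! i) (xs ! i)" using rs(4) True n_def by auto
        moreover have "r (Suc i) = rs ! Suc i" using si g(1) rs(3) unfolding r_def n_def by simp
        ultimately show ?thesis using True unfolding r_def w_def by simp
      next
        case False
        then have "Suc i - n = Suc (i - n)" by auto
        then show ?thesis using g False unfolding r_def w_def n_def by auto
      qed
    qed
    have acc: "\<exists>\<^sub>\<infinity>i. r i \<in> accepting A"
      by (rule INFM_offset[where n=n, OF g(3)]) (simp add: r_def)
    have "w \<in> lang A" unfolding lang_def accepting_run_def using r0 q0 rS acc by blast
    moreover have "parikh w = mask_add (cv (map w [0..<n])) m"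
    proof (rule parikh_mask)
      show "\<forall>i\<ge>n. w i \<in> m" using g by (auto simp: w_def)
      show "\<forall>\<sigma>\<in>m. infinite {i. w i = \<sigma>}"
      proof
        fix \<sigma> assume "\<sigma> \<in> m"
        then have "\<exists>\<^sub>\<infinity>i. w' i = \<sigma>" using g(5) by blast
        then have "\<exists>\<^sub>\<infinity>i. w i = \<sigma>" by (rule INFM_offset[where n=n]) (simp add: w_def)
        then show "infinite {i. w i = \<sigma>}" by (simp add: INFM_iff_infinite)
      qed
    qed
    moreover have "map w [0..<n] = xs" unfolding w_def n_def by (rule nth_equalityI) auto
    ultimately show "y \<in> parikh ` lang A" using y xs(2) by (metis image_eqI)
  qed
qed

lemma dir2:
  fixes A :: "'a::finite nba"
  assumes "wf_nba A" shows "masked_semilinear (parikh ` perm_closure A)"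
  unfolding masked_semilinear_def perm_closure_parikh lang_char[OF assms]
  by (rule exI[of _ "Sm A"], intro conjI allI impI Sm_semilinear[OF assms] refl)


lemma count_concat: "count_list (concat xss) y = sum_list (map (\<lambda>xs. count_list xs y) xss)"
  by (induction xss) auto

lemma count_replicate: "count_list (replicate n x) y = (if x = y then n else 0)"
  by (induction n) auto

definition enumL :: "'a::finite list" where "enumL = (SOME xs. set xs = UNIV \<and> distinct xs)"

lemma enumL: "set (enumL :: 'a::finite list) = UNIV" "distinct (enumL :: 'a::finite list)"
proof -
  have "\<exists>xs::'a list. set xs = UNIV \<and> distinct xs" using finite_distinct_list[OF finite_UNIV] by blast
  then have "set (enumL :: 'a list) = UNIV \<and> distinct (enumL :: 'a list)" unfolding enumL_def by (rule someI_ex)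
  then show "set (enumL :: 'a::finite list) = UNIV" "distinct (enumL :: 'a::finite list)" by auto
qed

definition wd :: "('a::finite \<Rightarrow> nat) \<Rightarrow> 'a list" where
  "wd v = concat (map (\<lambda>\<sigma>. replicate (v \<sigma>) \<sigma>) enumL)"

lemma cv_wd: "cv (wd v) = v"
proof
  fix y
  have "cv (wd v) y = sum_list (map (\<lambda>\<sigma>. if \<sigma> = y then v \<sigma> else 0) enumL)"
    unfolding cv_def wd_def count_concat by (simp add: count_replicate comp_def)
  also have "\<dots> = (\<Sum>\<sigma>\<in>set enumL. if \<sigma> = y then v \<sigma> else 0)"
    using enumL(2) by (rule sum_list_distinct_conv_sum_set)
  also have "\<dots> = v y" unfolding enumL(1) by simp
  finally show "cv (wd v) y = v y" .
qed

lemma cycle_parikh: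
  assumes ne: "ms \<noteq> []" and cyc: "\<forall>k. w (M + k) = ms ! (k mod length ms)"
  shows "parikh w = mask_add (cv (map w [0..<M])) (set ms)"
proof (rule parikh_mask)
  show "\<forall>i\<ge>M. w i \<in> set ms"
  proof (intro allI impI)
    fix i assume "i \<ge> M"
    then have "w i = ms ! ((i - M) mod length ms)" using cyc[rule_format, of "i - M"] by simp
    then show "w i \<in> set ms" using ne by simp
  qed
  show "\<forall>\<sigma>\<in>set ms. infinite {i. w i = \<sigma>}"
  proof
    fix \<sigma> assume "\<sigma> \<in> set ms"
    then obtain j where j: "j < length ms" "ms ! j = \<sigma>" by (auto simp: in_set_conv_nth)
    show "infinite {i. w i = \<sigma>}" unfolding infinite_nat_iff_unbounded
    proof
      fix m
      define k where "k = j + (m + 1) * length ms"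
      have "k mod length ms = j" unfolding k_def using j by (simp only: mod_mult_self1 mod_less)
      moreover have "(m + 1) * length ms \<ge> m + 1" using mult_le_mono2[of 1 "length ms" "m+1"] ne by (simp add: Suc_le_eq)
      then have "M + k > m" unfolding k_def by simp
      ultimately show "\<exists>n>m. n \<in> {i. w i = \<sigma>}" using cyc[rule_format, of k] j by (intro exI[of _ "M + k"]) auto
    qed
  qed
qed

type_synonym 'a comp = "'a list \<times> ('a \<Rightarrow> nat) \<times> ('a \<Rightarrow> nat) list"
type_synonym 'a lst = "(('a \<Rightarrow> nat) \<times> bool) + nat"

definition sub1 :: "('a \<Rightarrow> nat) \<Rightarrow> 'a \<Rightarrow> ('a \<Rightarrow> nat)" where
  "sub1 r \<sigma> = (\<lambda>\<tau>. r \<tau> - unitv \<sigma> \<tau>)"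

fun dc :: "'a comp \<Rightarrow> 'a lst \<Rightarrow> 'a \<Rightarrow> 'a lst set" where
  "dc (ms, b, ps) (Inl (r, f)) \<sigma> =
     (if r = 0 then (\<lambda>p. Inl (sub1 p \<sigma>, f)) ` {p \<in> set ps. 0 < p \<sigma>}
        \<union> (if \<not> f \<and> 0 < b \<sigma> then {Inl (sub1 b \<sigma>, True)} else {})
        \<union> (if f \<and> \<sigma> = ms ! 0 then {Inr (1 mod length ms)} else {})
      else if 0 < r \<sigma> then {Inl (sub1 r \<sigma>, f)} else {})"
| "dc (ms, b, ps) (Inr j) \<sigma> = (if \<sigma> = ms ! j then {Inr (Suc j mod length ms)} else {})"

fun initc :: "'a comp \<Rightarrow> 'a lst" where
  "initc (ms, b, ps) = Inl (0, b = 0)"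

fun bnd :: "'a comp \<Rightarrow> 'a \<Rightarrow> nat" where
  "bnd (ms, b, ps) = (\<lambda>\<sigma>. b \<sigma> + sum_list (map (\<lambda>p. p \<sigma>) ps))"

fun Qc :: "'a comp \<Rightarrow> 'a lst set" where
  "Qc (ms, b, ps) = Inl ` ({r. \<forall>\<sigma>. r \<sigma> \<le> bnd (ms, b, ps) \<sigma>} \<times> UNIV) \<union> Inr ` {..<length ms}"

lemma finite_bounded_funs: "finite {r :: 'a::finite \<Rightarrow> nat. \<forall>\<sigma>. r \<sigma> \<le> B \<sigma>}"
proof (rule finite_subset)
  show "finite {f :: 'a \<Rightarrow> nat. \<forall>x. (x \<in> UNIV \<longrightarrow> f x \<in> {..sum B UNIV}) \<and> (x \<notin> UNIV \<longrightarrow> f x = 0)}"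
    by (rule finite_set_of_finite_funs) auto
  have "\<And>\<sigma>. B \<sigma> \<le> sum B UNIV" by (rule member_le_sum) auto
  then show "{r :: 'a \<Rightarrow> nat. \<forall>\<sigma>. r \<sigma> \<le> B \<sigma>} \<subseteq> {f. \<forall>x. (x \<in> UNIV \<longrightarrow> f x \<in> {..sum B UNIV}) \<and> (x \<notin> UNIV \<longrightarrow> f x = 0)}"
    by clarsimp (meson le_trans)
qed

lemma finite_Qc: "finite (Qc (c :: 'a::finite comp))"
  by (cases c) (auto intro!: finite_cartesian_product finite_bounded_funs)


lemma unitv_sub1: "0 < p \<sigma> \<Longrightarrow> unitv \<sigma> \<tau> + sub1 p \<sigma> \<tau> = p \<tau>"
  by (auto simp: unitv_def sub1_def)

lemma count_upt_Suc: "count_list (map w [0..<Suc t]) \<tau> = count_list (map w [0..<t]) \<tau> + unitv (w t) \<tau>"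
  by (simp add: unitv_def)

lemma fun_zero_iff: "(r :: 'a \<Rightarrow> nat) = 0 \<longleftrightarrow> (\<forall>\<tau>. r \<tau> = 0)"
  by (auto simp: fun_eq_iff)

lemma comp_sound:
  assumes c: "c = (ms, b, ps)" and ne: "ms \<noteq> []"
    and r0: "rl 0 = initc c" and rS: "\<forall>i. rl (Suc i) \<in> dc c (rl i) (w i)" and acc: "\<exists>\<^sub>\<infinity>i. rl i \<in> range Inr"
  shows "parikh w \<in> (\<lambda>x. mask_add x (set ms)) ` linear_set b (set ps)"
proof -
  obtain t0 where "rl t0 \<in> range Inr" using INFM_EX[OF acc] by blast
  define N where "N = (LEAST t. rl t \<in> range Inr)"
  have N: "rl N \<in> range Inr" unfolding N_def by (rule LeastI) fact
  have bef: "\<And>t. t < N \<Longrightarrow> rl t \<notin> range Inr" unfolding N_def by (rule not_less_Least)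
  have "N \<noteq> 0" using N r0 c by (metis Inl_Inr_False initc.simps rangeE)
  then obtain M where MN: "N = Suc M" by (cases N) auto
  have inv: "t \<le> M \<Longrightarrow> (\<exists>rv f cc. rl t = Inl (rv, f) \<and>
      (\<forall>\<tau>. count_list (map w [0..<t]) \<tau> + rv \<tau> = (if f then b \<tau> else 0) + (\<Sum>p\<in>set ps. cc p * p \<tau>)))" for t
  proof (induction t)
    case 0
    show ?case using r0 c by (intro exI[of _ 0] exI[of _ "b = 0"] exI[of _ "\<lambda>_. 0"]) auto
  next
    case (Suc t)
    then obtain rv f cc where IH: "rl t = Inl (rv, f)"
      "\<forall>\<tau>. count_list (map w [0..<t]) \<tau> + rv \<tau> = (if f then b \<tau> else 0) + (\<Sum>p\<in>set ps. cc p * p \<tau>)" by auto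
    have notr: "rl (Suc t) \<notin> range Inr" using bef Suc.prems MN by auto
    have tr: "rl (Suc t) \<in> dc c (Inl (rv, f)) (w t)" using rS IH(1) by metis
    let ?\<sigma> = "w t"
    show ?case
    proof (cases "rv = 0")
      case True
      then have cnt: "\<forall>\<tau>. count_list (map w [0..<t]) \<tau> = (if f then b \<tau> else 0) + (\<Sum>p\<in>set ps. cc p * p \<tau>)"
        using IH(2) by simp
      from tr True c notr consider
          (P) p where "p \<in> set ps" "0 < p ?\<sigma>" "rl (Suc t) = Inl (sub1 p ?\<sigma>, f)"
        | (B) "\<not> f" "0 < b ?\<sigma>" "rl (Suc t) = Inl (sub1 b ?\<sigma>, True)"
        by (auto split: if_splits)
      then show ?thesis
      proof cases
        case P
        define cc' where "cc' = (\<lambda>q. cc q + (if q = p then 1 else 0))"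
        have "\<And>\<tau>. (\<Sum>q\<in>set ps. cc' q * q \<tau>) = (\<Sum>q\<in>set ps. cc q * q \<tau>) + p \<tau>"
        proof -
          fix \<tau>
          have "(\<Sum>q\<in>set ps. cc' q * q \<tau>) = (\<Sum>q\<in>set ps. cc q * q \<tau>) + (\<Sum>q\<in>set ps. if q = p then q \<tau> else 0)"
            unfolding cc'_def sum.distrib[symmetric] by (rule sum.cong) (auto simp: algebra_simps)
          also have "(\<Sum>q\<in>set ps. if q = p then q \<tau> else 0) = p \<tau>" using P(1) by (simp add: sum.delta)
          finally show "?thesis \<tau>" .
        qed
        then show ?thesis using P cnt unitv_sub1[where p=p and \<sigma>="w t", OF P(2)]
          by (intro exI[of _ "sub1 p ?\<sigma>"] exI[of _ f] exI[of _ cc']) (auto simp: count_upt_Suc algebra_simps sub1_def unitv_def)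
      next
        case B
        have "count_list (map w [0..<Suc t]) \<tau> + sub1 b ?\<sigma> \<tau> = b \<tau> + (\<Sum>p\<in>set ps. cc p * p \<tau>)" for \<tau>
          using cnt B unitv_sub1[where p=b and \<sigma>="w t" and \<tau>=\<tau>, OF B(2)] by (auto simp: count_upt_Suc algebra_simps sub1_def unitv_def)
        then show ?thesis using B by (intro exI[of _ "sub1 b ?\<sigma>"] exI[of _ True] exI[of _ cc]) auto
      qed
    next
      case False
      then have "0 < rv ?\<sigma>" "rl (Suc t) = Inl (sub1 rv ?\<sigma>, f)" using tr c by (auto split: if_splits)
      moreover have "count_list (map w [0..<Suc t]) \<tau> + sub1 rv ?\<sigma> \<tau> = count_list (map w [0..<t]) \<tau> + rv \<tau>" for \<tau>
        using unitv_sub1[where p=rv and \<sigma>="w t" and \<tau>=\<tau>, OF calculation(1)] by (auto simp: count_upt_Suc algebra_simps sub1_def unitv_def)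
      ultimately show ?thesis using IH by (intro exI[of _ "sub1 rv ?\<sigma>"] exI[of _ f] exI[of _ cc]) auto
    qed
  qed
  obtain rv f cc where I: "rl M = Inl (rv, f)"
    "\<forall>\<tau>. count_list (map w [0..<M]) \<tau> + rv \<tau> = (if f then b \<tau> else 0) + (\<Sum>p\<in>set ps. cc p * p \<tau>)"
    using inv[of M] by auto
  obtain j where j: "rl N = Inr j" using N by auto
  have trM: "rl N \<in> dc c (Inl (rv, f)) (w M)" using rS I(1) MN by metis
  have rv0: "rv = 0" using trM j c by (auto split: if_splits)
  have fM: "f" "w M = ms ! 0" "j = 1 mod length ms" using trM j c rv0 by (auto split: if_splits)
  have inlin: "cv (map w [0..<M]) \<in> linear_set b (set ps)"
  proof -
    have "cv (map w [0..<M]) = (\<lambda>\<tau>. b \<tau> + (\<Sum>p\<in>set ps. cc p * p \<tau>))"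
      using I(2) rv0 fM(1) by (auto simp: cv_def)
    then show ?thesis unfolding linear_set_def by blast
  qed
  have cyc: "rl (Suc (M + k)) = Inr (Suc k mod length ms) \<and> w (M + k) = ms ! (k mod length ms)" for k
  proof (induction k)
    case 0 then show ?case using j MN fM by simp
  next
    case (Suc k)
    let ?j = "Suc k mod length ms"
    have "rl (Suc (M + Suc k)) \<in> dc c (Inr ?j) (w (M + Suc k))" using rS Suc.IH by (metis add_Suc_right)
    then have "w (M + Suc k) = ms ! ?j" "rl (Suc (M + Suc k)) = Inr (Suc ?j mod length ms)"
      using c by (auto split: if_splits)
    then show ?case by (simp add: mod_Suc_eq)
  qed
  have "parikh w = mask_add (cv (map w [0..<M])) (set ms)"
    by (rule cycle_parikh[OF ne]) (use cyc in blast)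
  then show ?thesis using inlin by blast
qed


lemma cv_pos_ne: "0 < v a \<Longrightarrow> (v :: 'a \<Rightarrow> nat) \<noteq> 0"
  by auto

lemma comp_complete:
  fixes c :: "'a::finite comp"
  assumes c: "c = (ms, b, ps)" and ne: "ms \<noteq> []" and dps: "distinct ps"
    and x: "x \<in> linear_set b (set ps)"
  shows "\<exists>w rl. rl 0 = initc c \<and> (\<forall>i. rl (Suc i) \<in> dc c (rl i) (w i) \<inter> Qc c)
            \<and> (\<exists>\<^sub>\<infinity>i. rl i \<in> range Inr) \<and> parikh w = mask_add x (set ms)"
proof -
  define \<delta>' where "\<delta>' = (\<lambda>s a. dc c s a \<inter> Qc c)"
  have inQ: "\<forall>\<sigma>. r \<sigma> \<le> bnd c \<sigma> \<Longrightarrow> Inl (r, f) \<in> Qc c" for r f using c by auto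
  have drain: "cv xs = r \<Longrightarrow> \<forall>\<sigma>. r \<sigma> \<le> bnd c \<sigma> \<Longrightarrow> steps \<delta>' (Inl (r, f)) xs (Inl (0, f))" for xs r f
  proof (induction xs arbitrary: r)
    case Nil then show ?case by (simp add: cv_Nil)
  next
    case (Cons a xs)
    have ra: "0 < r a" using Cons.prems(1) by (auto simp: cv_def)
    then have rne: "r \<noteq> 0" by auto
    have sr: "sub1 r a = cv xs" using Cons.prems(1) by (auto simp: cv_def sub1_def unitv_def)
    have bd: "\<forall>\<sigma>. sub1 r a \<sigma> \<le> bnd c \<sigma>" using Cons.prems(2) by (auto simp: sub1_def) (meson diff_le_self le_trans)
    have "Inl (sub1 r a, f) \<in> \<delta>' (Inl (r, f)) a" unfolding \<delta>'_def using c ra rne inQ[OF bd] by simp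
    then show ?case using Cons.IH[OF sr[symmetric] bd] by auto
  qed
  have start: "steps \<delta>' (Inl (0, f)) xs (Inl (0, f'))"
    if "cv xs = v" "\<forall>\<sigma>. v \<sigma> \<le> bnd c \<sigma>" "\<And>a. 0 < v a \<Longrightarrow> Inl (sub1 v a, f') \<in> dc c (Inl (0, f)) a"
       "v = 0 \<Longrightarrow> f' = f" for xs v f f'
  proof (cases xs)
    case Nil
    then have "v = 0" using that(1) by (simp add: cv_Nil)
    then show ?thesis using Nil that(4) by simp
  next
    case (Cons a rest)
    have va: "0 < v a" using that(1) Cons by (auto simp: cv_def)
    have sr: "sub1 v a = cv rest" using that(1) Cons by (auto simp: cv_def sub1_def unitv_def)
    have bd: "\<forall>\<sigma>. sub1 v a \<sigma> \<le> bnd c \<sigma>" using that(2) by (auto simp: sub1_def) (meson diff_le_self le_trans)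
    have "Inl (sub1 v a, f') \<in> \<delta>' (Inl (0, f)) a" unfolding \<delta>'_def using that(3)[OF va] inQ[OF bd] by simp
    then show ?thesis using drain[OF sr[symmetric] bd] Cons by auto
  qed
  have bndp: "p \<in> set ps \<Longrightarrow> p \<sigma> \<le> bnd c \<sigma>" for p \<sigma>
  proof -
    assume "p \<in> set ps"
    then have "p \<sigma> \<in> set (map (\<lambda>p. p \<sigma>) ps)" by auto
    then have "p \<sigma> \<le> sum_list (map (\<lambda>p. p \<sigma>) ps)" by (intro member_le_sum_list) auto
    then show ?thesis using c by simp
  qed
  have loop1: "p \<in> set ps \<Longrightarrow> steps \<delta>' (Inl (0, f)) (wd p) (Inl (0, f))" for p f
    by (rule start[OF cv_wd]) (use c bndp in auto)
  have loopk: "p \<in> set ps \<Longrightarrow> steps \<delta>' (Inl (0, f)) (concat (replicate k (wd p))) (Inl (0, f))" for p f k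
    by (induction k) (auto simp: steps_append intro: loop1)
  have loops: "set qs \<subseteq> set ps \<Longrightarrow> steps \<delta>' (Inl (0, f)) (concat (map (\<lambda>p. concat (replicate (cc p) (wd p))) qs)) (Inl (0, f))"
    for qs cc f
    by (induction qs) (auto simp: steps_append intro: loopk)
  have bpart: "steps \<delta>' (Inl (0, b = 0)) (wd b) (Inl (0, True))"
    by (rule start[OF cv_wd]) (use c in \<open>auto simp: fun_zero_iff\<close>)
  obtain cc where xdef: "x = (\<lambda>\<sigma>. b \<sigma> + (\<Sum>p\<in>set ps. cc p * p \<sigma>))" using x unfolding linear_set_def by auto
  define u where "u = concat (map (\<lambda>p. concat (replicate (cc p) (wd p))) ps) @ wd b"
  have su: "steps \<delta>' (initc c) u (Inl (0, True))"
    unfolding u_def steps_append using loops[of ps "b = 0" cc] bpart c by auto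
  have cvu: "cv u = x"
  proof
    fix \<sigma>
    have "cv u \<sigma> = sum_list (map (\<lambda>p. cc p * p \<sigma>) ps) + b \<sigma>"
    proof -
      have cw: "\<And>v \<tau>. count_list (wd v) \<tau> = v \<tau>" using cv_wd unfolding cv_def by metis
      show ?thesis unfolding u_def cv_def by (simp add: count_concat comp_def sum_list_replicate cw)
    qed
    also have "\<dots> = x \<sigma>" unfolding xdef using dps by (simp add: sum_list_distinct_conv_sum_set)
    finally show "cv u \<sigma> = x \<sigma>" .
  qed
  from steps_run[OF su] obtain rs where rs: "length rs = Suc (length u)" "rs ! 0 = initc c"
    "rs ! length u = Inl (0, True)" "\<forall>i<length u. rs ! Suc i \<in> \<delta>' (rs ! i) (u ! i)" by blast
  define n where "n = length u"
  define L where "L = length ms"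
  have L: "0 < L" using ne unfolding L_def by simp
  define w where "w = (\<lambda>i. if i < n then u ! i else ms ! ((i - n) mod L))"
  define rl where "rl = (\<lambda>i. if i \<le> n then rs ! i else Inr ((i - n) mod L))"
  have trans: "rl (Suc i) \<in> dc c (rl i) (w i) \<inter> Qc c" for i
  proof -
    consider "i < n" | "i = n" | "i > n" by linarith
    then show ?thesis
    proof cases
      case 1 then show ?thesis using rs(4) unfolding rl_def w_def n_def \<delta>'_def by auto
    next
      case 2
      then have "rl (Suc i) = Inr (1 mod L)" "rl i = Inl (0, True)" "w i = ms ! 0"
        using rs(3) unfolding rl_def w_def n_def by auto
      moreover have "Inr (1 mod L) \<in> Qc c" using c mod_less_divisor[OF L, of 1] unfolding L_def by auto
      moreover have "Inr (1 mod L) \<in> dc c (Inl (0, True)) (ms ! 0)" using c unfolding L_def by simp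
      ultimately show ?thesis by simp
    next
      case 3
      define j where "j = (i - n) mod L"
      have "Suc i - n = Suc (i - n)" using 3 by simp
      then have "rl (Suc i) = Inr (Suc j mod L)" "rl i = Inr j" "w i = ms ! j"
        using 3 unfolding rl_def w_def j_def by (auto simp: mod_Suc_eq)
      moreover have "Inr (Suc j mod L) \<in> Qc c" using c mod_less_divisor[OF L, of "Suc j"] unfolding L_def by auto
      moreover have "Inr (Suc j mod L) \<in> dc c (Inr j) (ms ! j)" using c unfolding L_def by simp
      ultimately show ?thesis by simp
    qed
  qed
  have r0: "rl 0 = initc c" using rs(2) unfolding rl_def by simp
  have acc: "\<exists>\<^sub>\<infinity>i. rl i \<in> range Inr"
    unfolding INFM_nat
  proof
    fix m show "\<exists>i>m. rl i \<in> range Inr" by (intro exI[of _ "m + n + 1"]) (auto simp: rl_def)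
  qed
  have "parikh w = mask_add (cv (map w [0..<n])) (set ms)"
    by (rule cycle_parikh[OF ne]) (auto simp: w_def L_def)
  moreover have "map w [0..<n] = u" unfolding w_def n_def by (rule nth_equalityI) auto
  ultimately have "parikh w = mask_add x (set ms)" using cvu by simp
  then show ?thesis using r0 trans acc by blast
qed


definition enc :: "('q::countable \<Rightarrow> 'a \<Rightarrow> 'q set) \<Rightarrow> 'q set \<Rightarrow> 'q set \<Rightarrow> 'q set \<Rightarrow> 'a nba" where
  "enc \<delta> I F Q = \<lparr>states = to_nat ` Q, trans = (\<lambda>n a. to_nat ` (\<delta> (from_nat n) a \<inter> Q)),
     initial = to_nat ` (I \<inter> Q), accepting = to_nat ` (F \<inter> Q)\<rparr>"

lemma wf_enc: "finite Q \<Longrightarrow> wf_nba (enc \<delta> I F Q)"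
  unfolding wf_nba_def enc_def by auto

lemma lang_enc: "lang (enc \<delta> I F Q) = {w. \<exists>r. r 0 \<in> I \<inter> Q \<and> (\<forall>i. r (Suc i) \<in> \<delta> (r i) (w i) \<inter> Q) \<and> (\<exists>\<^sub>\<infinity>i. r i \<in> F)}"
proof
  show "lang (enc \<delta> I F Q) \<subseteq> {w. \<exists>r. r 0 \<in> I \<inter> Q \<and> (\<forall>i. r (Suc i) \<in> \<delta> (r i) (w i) \<inter> Q) \<and> (\<exists>\<^sub>\<infinity>i. r i \<in> F)}"
  proof
    fix w assume "w \<in> lang (enc \<delta> I F Q)"
    then obtain rn where rn: "rn 0 \<in> to_nat ` (I \<inter> Q)" "\<forall>i. rn (Suc i) \<in> to_nat ` (\<delta> (from_nat (rn i)) (w i) \<inter> Q)"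
      "\<exists>\<^sub>\<infinity>i. rn i \<in> to_nat ` (F \<inter> Q)"
      unfolding lang_def accepting_run_def enc_def by auto
    have "from_nat (rn 0) \<in> I \<inter> Q" using rn(1) by auto
    moreover have "from_nat (rn (Suc i)) \<in> \<delta> (from_nat (rn i)) (w i) \<inter> Q" for i
      using rn(2)[rule_format, of i] by auto
    moreover have "\<exists>\<^sub>\<infinity>i. from_nat (rn i) \<in> F" using rn(3) by (rule INFM_mono) auto
    ultimately show "w \<in> {w. \<exists>r. r 0 \<in> I \<inter> Q \<and> (\<forall>i. r (Suc i) \<in> \<delta> (r i) (w i) \<inter> Q) \<and> (\<exists>\<^sub>\<infinity>i. r i \<in> F)}"
      by (intro CollectI exI[of _ "\<lambda>i. from_nat (rn i)"]) auto
  qed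
next
  show "{w. \<exists>r. r 0 \<in> I \<inter> Q \<and> (\<forall>i. r (Suc i) \<in> \<delta> (r i) (w i) \<inter> Q) \<and> (\<exists>\<^sub>\<infinity>i. r i \<in> F)} \<subseteq> lang (enc \<delta> I F Q)"
  proof
    fix w assume "w \<in> {w. \<exists>r. r 0 \<in> I \<inter> Q \<and> (\<forall>i. r (Suc i) \<in> \<delta> (r i) (w i) \<inter> Q) \<and> (\<exists>\<^sub>\<infinity>i. r i \<in> F)}"
    then obtain r where r: "r 0 \<in> I \<inter> Q" "\<forall>i. r (Suc i) \<in> \<delta> (r i) (w i) \<inter> Q" "\<exists>\<^sub>\<infinity>i. r i \<in> F" by auto
    have rQ: "r i \<in> Q" for i using r by (cases i) auto
    have "accepting_run (enc \<delta> I F Q) w (\<lambda>i. to_nat (r i))"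
      unfolding accepting_run_def enc_def
    proof (simp, intro conjI allI)
      show "to_nat (r 0) \<in> to_nat ` (I \<inter> Q)" using r(1) by auto
      fix i show "to_nat (r (Suc i)) \<in> to_nat ` (\<delta> (r i) (w i) \<inter> Q)" using r(2) by auto
    next
      show "\<exists>\<^sub>\<infinity>i. to_nat (r i) \<in> to_nat ` (F \<inter> Q)" using r(3) by (rule INFM_mono) (use rQ in auto)
    qed
    then show "w \<in> lang (enc \<delta> I F Q)" unfolding lang_def by auto
  qed
qed

definition Gd :: "'a comp list \<Rightarrow> nat \<times> 'a lst \<Rightarrow> 'a \<Rightarrow> (nat \<times> 'a lst) set" where
  "Gd cs q a = Pair (fst q) ` dc (cs ! fst q) (snd q) a"

definition GI :: "'a comp list \<Rightarrow> (nat \<times> 'a lst) set" where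
  "GI cs = (\<lambda>i. (i, initc (cs ! i))) ` {..<length cs}"

definition GQ :: "'a comp list \<Rightarrow> (nat \<times> 'a lst) set" where
  "GQ cs = Sigma {..<length cs} (\<lambda>i. Qc (cs ! i))"

definition cimg :: "'a comp \<Rightarrow> ('a \<Rightarrow> enat) set" where
  "cimg c = (case c of (ms, b, ps) \<Rightarrow> (\<lambda>x. mask_add x (set ms)) ` linear_set b (set ps))"

lemma union_lang:
  fixes cs :: "'a::finite comp list"
  assumes ok: "\<forall>c\<in>set cs. fst c \<noteq> [] \<and> distinct (snd (snd c))"
  shows "parikh ` lang (enc (Gd cs) (GI cs) (UNIV \<times> range Inr) (GQ cs)) = (\<Union>c\<in>set cs. cimg c)"
proof
  show "parikh ` lang (enc (Gd cs) (GI cs) (UNIV \<times> range Inr) (GQ cs)) \<subseteq> (\<Union>c\<in>set cs. cimg c)"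
  proof
    fix y assume "y \<in> parikh ` lang (enc (Gd cs) (GI cs) (UNIV \<times> range Inr) (GQ cs))"
    then obtain w r where y: "y = parikh w" and r: "r 0 \<in> GI cs \<inter> GQ cs"
      "\<forall>i. r (Suc i) \<in> Gd cs (r i) (w i) \<inter> GQ cs" "\<exists>\<^sub>\<infinity>i. r i \<in> UNIV \<times> range Inr"
      unfolding lang_enc by blast
    obtain i where i: "i < length cs" "r 0 = (i, initc (cs ! i))" using r(1) unfolding GI_def by auto
    have fst: "fst (r t) = i" for t
    proof (induction t)
      case 0 then show ?case using i by simp
    next
      case (Suc t) then show ?case using r(2)[rule_format, of t] unfolding Gd_def by auto
    qed
    obtain ms b ps where c: "cs ! i = (ms, b, ps)" by (cases "cs ! i") auto
    have cin: "cs ! i \<in> set cs" using i by simp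
    have ne: "ms \<noteq> []" using ok cin c by force
    have "parikh w \<in> (\<lambda>x. mask_add x (set ms)) ` linear_set b (set ps)"
    proof (rule comp_sound[OF c ne])
      show "snd (r 0) = initc (cs ! i)" using i by simp
      show "\<forall>t. snd (r (Suc t)) \<in> dc (cs ! i) (snd (r t)) (w t)"
        using r(2) fst unfolding Gd_def by (metis (no_types, lifting) IntD1 imageE snd_conv)
      show "\<exists>\<^sub>\<infinity>t. snd (r t) \<in> range Inr" using r(3) by (rule INFM_mono) auto
    qed
    then show "y \<in> (\<Union>c\<in>set cs. cimg c)" using y cin c unfolding cimg_def by auto
  qed
next
  show "(\<Union>c\<in>set cs. cimg c) \<subseteq> parikh ` lang (enc (Gd cs) (GI cs) (UNIV \<times> range Inr) (GQ cs))"
  proof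
    fix y assume "y \<in> (\<Union>c\<in>set cs. cimg c)"
    then obtain i where i: "i < length cs" "y \<in> cimg (cs ! i)" by (auto simp: in_set_conv_nth)
    obtain ms b ps where c: "cs ! i = (ms, b, ps)" by (cases "cs ! i") auto
    have cin: "cs ! i \<in> set cs" using i by simp
    have ne: "ms \<noteq> []" and dps: "distinct ps" using ok cin c by force+
    obtain x where x: "x \<in> linear_set b (set ps)" "y = mask_add x (set ms)" using i(2) c unfolding cimg_def by auto
    from comp_complete[OF c ne dps x(1)] obtain w rl where wr: "rl 0 = initc (cs ! i)"
      "\<forall>t. rl (Suc t) \<in> dc (cs ! i) (rl t) (w t) \<inter> Qc (cs ! i)" "\<exists>\<^sub>\<infinity>t. rl t \<in> range Inr"
      "parikh w = mask_add x (set ms)" by blast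
    have "rl 0 \<in> Qc (cs ! i)" using wr(1) c by auto
    then have "(\<lambda>t. (i, rl t)) 0 \<in> GI cs \<inter> GQ cs" using i wr(1) unfolding GI_def GQ_def by auto
    moreover have "\<forall>t. (i, rl (Suc t)) \<in> Gd cs (i, rl t) (w t) \<inter> GQ cs"
      using wr(2) i unfolding Gd_def GQ_def by auto
    moreover have "\<exists>\<^sub>\<infinity>t. (i, rl t) \<in> UNIV \<times> range Inr" using wr(3) by (rule INFM_mono) auto
    ultimately have "w \<in> lang (enc (Gd cs) (GI cs) (UNIV \<times> range Inr) (GQ cs))" unfolding lang_enc
      by (intro CollectI exI[of _ "\<lambda>t. (i, rl t)"]) simp
    then show "y \<in> parikh ` lang (enc (Gd cs) (GI cs) (UNIV \<times> range Inr) (GQ cs))" using wr(4) x(2) by (metis image_eqI)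
  qed
qed

lemma finite_GQ: "finite (GQ (cs :: 'a::finite comp list))"
  unfolding GQ_def by (auto intro: finite_Qc)


definition dl :: "'b set \<Rightarrow> 'b list" where "dl A = (SOME xs. set xs = A \<and> distinct xs)"

lemma dl: "finite A \<Longrightarrow> set (dl A) = A \<and> distinct (dl A)"
  unfolding dl_def by (rule someI_ex) (rule finite_distinct_list)

lemma dir1:
  fixes S :: "('a::finite \<Rightarrow> enat) set"
  assumes "masked_semilinear S"
  shows "\<exists>A :: 'a nba. wf_nba A \<and> S = parikh ` perm_closure A"
proof -
  from assms obtain Sm where sl: "\<forall>m. m \<noteq> {} \<longrightarrow> semilinear (Sm m)"
    and S: "S = (\<Union>m\<in>{m. m \<noteq> {}}. (\<lambda>x. mask_add x m) ` Sm m)"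
    unfolding masked_semilinear_def by blast
  have "\<forall>m. \<exists>L. m \<noteq> {} \<longrightarrow> finite L \<and> (\<forall>(b, P)\<in>L. finite P) \<and> Sm m = (\<Union>(b, P)\<in>L. linear_set b P)"
  proof
    fix m show "\<exists>L. m \<noteq> {} \<longrightarrow> finite L \<and> (\<forall>(b, P)\<in>L. finite P) \<and> Sm m = (\<Union>(b, P)\<in>L. linear_set b P)"
    proof (cases "m = {}")
      case True then show ?thesis by blast
    next
      case False then have "semilinear (Sm m)" using sl by blast
      then show ?thesis unfolding semilinear_def by blast
    qed
  qed
  from choice[OF this] obtain Lf where Lf0: "\<forall>m. m \<noteq> {} \<longrightarrow> finite (Lf m) \<and> (\<forall>(b, P)\<in>Lf m. finite P) \<and> Sm m = (\<Union>(b, P)\<in>Lf m. linear_set b P)"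
    by blast
  have Lf: "\<And>m. m \<noteq> {} \<Longrightarrow> finite (Lf m) \<and> (\<forall>(b, P)\<in>Lf m. finite P) \<and> Sm m = (\<Union>(b, P)\<in>Lf m. linear_set b P)"
    using Lf0 by blast
  define C where "C = (\<Union>m\<in>{m :: 'a set. m \<noteq> {}}. (\<lambda>(b, P). (dl m, b, dl P)) ` Lf m)"
  have "finite C" unfolding C_def
    by (rule finite_UN_I) (use Lf in auto)
  then obtain cs where cs: "set cs = C" using finite_list by blast
  have ok: "\<forall>c\<in>set cs. fst c \<noteq> [] \<and> distinct (snd (snd c))"
  proof
    fix c assume "c \<in> set cs"
    then obtain m b P where "m \<noteq> {}" "(b, P) \<in> Lf m" "c = (dl m, b, dl P)" unfolding cs C_def by auto
    moreover have "finite P" using Lf calculation by blast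
    moreover have "set (dl m) = m" using dl[of m] by simp
    ultimately show "fst c \<noteq> [] \<and> distinct (snd (snd c))" using dl[of P] by auto
  qed
  have "S = (\<Union>c\<in>set cs. cimg c)"
  proof
    show "S \<subseteq> (\<Union>c\<in>set cs. cimg c)"
    proof
      fix y assume "y \<in> S"
      then obtain m where m1: "m \<in> {m. m \<noteq> {}}" "y \<in> (\<lambda>x. mask_add x m) ` Sm m" unfolding S by (rule UN_E)
      then obtain x where m: "m \<noteq> {}" "x \<in> Sm m" "y = mask_add x m" by auto
      have "x \<in> (\<Union>(b, P)\<in>Lf m. linear_set b P)" using Lf[OF m(1)] m(2) by simp
      then obtain bp where bp: "bp \<in> Lf m" "x \<in> (case bp of (b, P) \<Rightarrow> linear_set b P)" by (rule UN_E)
      obtain b P where bpe: "bp = (b, P)" by (cases bp)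
      have bP: "(b, P) \<in> Lf m" "x \<in> linear_set b P" using bp bpe by auto
      have "finite P" using Lf[OF m(1)] bP(1) by auto
      then have "cimg (dl m, b, dl P) = (\<lambda>x. mask_add x m) ` linear_set b P"
        unfolding cimg_def using dl[of m] dl[of P] by simp
      moreover have "(dl m, b, dl P) \<in> set cs" unfolding cs C_def
        by (rule UN_I[of m], use m(1) in simp) (rule image_eqI[of _ _ "(b, P)"], simp, rule bP(1))
      moreover have "y \<in> (\<lambda>x. mask_add x m) ` linear_set b P" using bP m by simp
      ultimately show "y \<in> (\<Union>c\<in>set cs. cimg c)" by blast
    qed
  next
    show "(\<Union>c\<in>set cs. cimg c) \<subseteq> S"
    proof
      fix y assume "y \<in> (\<Union>c\<in>set cs. cimg c)"
      then obtain c where c: "c \<in> set cs" "y \<in> cimg c" by blast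
      then obtain m b P where mbP: "m \<noteq> {}" "(b, P) \<in> Lf m" "c = (dl m, b, dl P)" unfolding cs C_def by auto
      have "finite P" using Lf[OF mbP(1)] mbP(2) by auto
      then have "cimg c = (\<lambda>x. mask_add x m) ` linear_set b P"
        unfolding cimg_def mbP(3) using dl[of m] dl[of P] by simp
      then obtain x where "x \<in> linear_set b P" "y = mask_add x m" using c by auto
      moreover have "x \<in> (\<Union>(b, P)\<in>Lf m. linear_set b P)"
        by (rule UN_I[OF mbP(2)]) (simp add: calculation(1))
      then have "x \<in> Sm m" using Lf[OF mbP(1)] by simp
      ultimately show "y \<in> S" unfolding S using mbP(1) by auto
    qed
  qed
  then have "S = parikh ` perm_closure (enc (Gd cs) (GI cs) (UNIV \<times> range Inr) (GQ cs))"
    unfolding perm_closure_parikh using union_lang[OF ok] by simp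
  moreover have "wf_nba (enc (Gd cs) (GI cs) (UNIV \<times> range Inr) (GQ cs))" by (rule wf_enc[OF finite_GQ])
  ultimately show ?thesis by blast
qed

theorem theorem1:
  fixes S :: "('a::finite \<Rightarrow> enat) set"
  assumes "S \<subseteq> M_set"
  shows "masked_semilinear S \<longleftrightarrow>
           (\<exists>A :: 'a nba. wf_nba A \<and> S = parikh ` perm_closure A)"
  using dir1 dir2 by blast

end
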